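(* Let $T$ be a triangulation of an unpunctured bordered surface $(S,M)$, let $\Sigma_{Q_{\overline T}}=(\{x_1,\dots,x_n\},\{F_1,\dots,F_n\})$ be its associated LP seed, and let $i\in\{1,\dots,n\}$. Then $\hat F_i=F_i$ if and only if $F_i\neq F_j$ for every $j\neq i$.
   Context: $(S,M)$: compact surface (possibly non-orientable) with nonempty boundary, marked points $M\subset\partial S$ meeting every boundary component, no punctures, not a monogon/digon/triangle; boundary segments carry variables generating the coefficient ring $R$. Quasi-arcs: arcs (up to isotopy) not bounding a Möbius strip with one marked point, and one-sided simple closed curves; compatible = disjoint, or the unique arc and one-sided curve in a Möbius strip with one marked point. Triangulation: maximal compatible set containing no one-sided curve; $x_1,\dots,x_n$ correspond to its arcs. Double cover and quiver: replace each cross-cap by a cylinder to get $\tilde S$, glue two copies along the new cylinder boundaries by the antipodal map (two oppositely oriented copies if $S$ orientable); $T$ lifts to $\overline T$, each arc/boundary segment $i$ having lifts $i,\tilde i$. $Q_{\overline T}$: vertices arcs and boundary segments of $\overline T$; arrow $i\to j$ for each triangle in which $j$ follows $i$ in the orientation; 2-cycles cancelled; $b_{ij}$ = (arrows $i\to j$) $-$ (arrows $j\to i$). $F_j=\prod_{b_{ij}+b_{\tilde ij}>0}x_i^{b_{ij}+b_{\tilde ij}}+\prod_{b_{ij}+b_{\tilde ij}<0}x_i^{-(b_{ij}+b_{\tilde ij})}$ over twin-pair representatives $i$. Normalisation (Lam–Pylyavskyy): $\hat F_j=F_j/\prod_{k\neq j}x_k^{a_k}$ where $a_k\ge0$ is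 maximal such that $F_k^{a_k}$ divides $F_j|_{x_k\leftarrow F_k/x}$ in $R[x_1,\dots,x_{k-1},x^{\pm1},x_{k+1},\dots,x_n]$. *)

theory Defs
  imports Main "HOL-Library.Poly_Mapping"
begin

text \<open>Each triangle t carries a fixed local orientation and sides (t,0),(t,1),(t,2) in this
cyclic order; side (t,s) runs from corner s to corner (s+1) mod 3.  The partial
involution gl glues sides in pairs (glued pairs = arcs of T, unglued sides = boundary
segments), and tw marks gluings that are orientation-incompatible (twisted).\<close>

type_synonym side = "nat \<times> nat"

definition sides :: "nat set \<Rightarrow> side set" where
  "sides Tr = Tr \<times> {0,1,2}"

definition valid_gluing :: "nat set \<Rightarrow> (side \<Rightarrow> side option) \<Rightarrow> (side \<Rightarrow> bool) \<Rightarrow> bool" where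
  "valid_gluing Tr gl tw \<longleftrightarrow> finite Tr \<and> Tr \<noteq> {} \<and>
     (\<forall>\<sigma>. gl \<sigma> \<noteq> None \<longrightarrow> \<sigma> \<in> sides Tr) \<and>
     (\<forall>\<sigma> \<sigma>'. gl \<sigma> = Some \<sigma>' \<longrightarrow> \<sigma>' \<in> sides Tr \<and> \<sigma>' \<noteq> \<sigma> \<and> gl \<sigma>' = Some \<sigma> \<and> tw \<sigma>' = tw \<sigma>)"

text \<open>Identification of corners induced by the gluing of sides.\<close>
definition corner_step :: "(side \<Rightarrow> side option) \<Rightarrow> (side \<Rightarrow> bool) \<Rightarrow> ((nat \<times> nat) \<times> (nat \<times> nat)) set" where
  "corner_step gl tw =
     {((t,s),(t',(s'+1) mod 3)) | t s t' s'. gl (t,s) = Some (t',s') \<and> \<not> tw (t,s)} \<union>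
     {((t,(s+1) mod 3),(t',s')) | t s t' s'. gl (t,s) = Some (t',s') \<and> \<not> tw (t,s)} \<union>
     {((t,s),(t',s')) | t s t' s'. gl (t,s) = Some (t',s') \<and> tw (t,s)} \<union>
     {((t,(s+1) mod 3),(t',(s'+1) mod 3)) | t s t' s'. gl (t,s) = Some (t',s') \<and> tw (t,s)}"

definition boundary_corner :: "(side \<Rightarrow> side option) \<Rightarrow> nat \<times> nat \<Rightarrow> bool" where
  "boundary_corner gl \<kappa> \<longleftrightarrow> gl (fst \<kappa>, snd \<kappa>) = None \<or> gl (fst \<kappa>, (snd \<kappa> + 2) mod 3) = None"

text \<open>No punctures: every vertex (class of corners) is a marked point on the boundary.\<close>
definition no_punctures :: "nat set \<Rightarrow> (side \<Rightarrow> side option) \<Rightarrow> (side \<Rightarrow> bool) \<Rightarrow> bool" where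
  "no_punctures Tr gl tw \<longleftrightarrow>
     (\<forall>\<kappa> \<in> Tr \<times> {0,1,2}. \<exists>\<kappa>'. (\<kappa>, \<kappa>') \<in> (corner_step gl tw)\<^sup>* \<and> boundary_corner gl \<kappa>')"

definition tri_connected :: "nat set \<Rightarrow> (side \<Rightarrow> side option) \<Rightarrow> bool" where
  "tri_connected Tr gl \<longleftrightarrow>
     (\<forall>t \<in> Tr. \<forall>t' \<in> Tr. (t, t') \<in> {(a, b). \<exists>s s'. gl (a, s) = Some (b, s')}\<^sup>*)"

text \<open>No arc of T bounds a Moebius strip with one marked point: a triangle two of whose
sides are glued to each other with a twist must have its third side on the boundary.\<close>
definition no_moebius_arc :: "(side \<Rightarrow> side option) \<Rightarrow> (side \<Rightarrow> bool) \<Rightarrow> bool" where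
  "no_moebius_arc gl tw \<longleftrightarrow>
     (\<forall>t s s'. gl (t, s) = Some (t, s') \<and> tw (t, s) \<longrightarrow> gl (t, 3 - s - s') = None)"

text \<open>(S,M) is not a triangle (a monogon or digon admits no triangulation).\<close>
definition not_single_triangle :: "(side \<Rightarrow> side option) \<Rightarrow> bool" where
  "not_single_triangle gl \<longleftrightarrow> (\<exists>\<sigma>. gl \<sigma> \<noteq> None)"

definition triangulated_surface :: "nat set \<Rightarrow> (side \<Rightarrow> side option) \<Rightarrow> (side \<Rightarrow> bool) \<Rightarrow> bool" where
  "triangulated_surface Tr gl tw \<longleftrightarrow> valid_gluing Tr gl tw \<and> tri_connected Tr gl \<and>
     no_punctures Tr gl tw \<and> no_moebius_arc gl tw \<and> not_single_triangle gl"

definition edge_of :: "(side \<Rightarrow> side option) \<Rightarrow> side \<Rightarrow> side set" where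
  "edge_of gl \<sigma> = insert \<sigma> {\<sigma>'. gl \<sigma> = Some \<sigma>'}"

definition edges :: "nat set \<Rightarrow> (side \<Rightarrow> side option) \<Rightarrow> side set set" where
  "edges Tr gl = edge_of gl ` sides Tr"

definition arcs :: "nat set \<Rightarrow> (side \<Rightarrow> side option) \<Rightarrow> side set set" where
  "arcs Tr gl = edge_of gl ` {\<sigma> \<in> sides Tr. gl \<sigma> \<noteq> None}"

text \<open>Lifted sides are pairs (side, sheet); triangle (t,False) carries the orientation of t,
triangle (t,True) the opposite one.  A twisted gluing swaps sheets.\<close>
definition lift_edge :: "(side \<Rightarrow> side option) \<Rightarrow> (side \<Rightarrow> bool) \<Rightarrow> side \<times> bool \<Rightarrow> (side \<times> bool) set" where
  "lift_edge gl tw p = insert p {(\<sigma>', (if tw (fst p) then \<not> snd p else snd p)) | \<sigma>'. gl (fst p) = Some \<sigma>'}"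

definition next_side :: "bool \<Rightarrow> nat \<Rightarrow> nat" where
  "next_side \<epsilon> s = (if \<epsilon> then (s + 2) mod 3 else (s + 1) mod 3)"

text \<open>Number of arrows A \<rightarrow> B of the quiver of the lifted triangulation: one for each
triangle of the cover in which B follows A in the orientation.\<close>
definition arrows :: "nat set \<Rightarrow> (side \<Rightarrow> side option) \<Rightarrow> (side \<Rightarrow> bool) \<Rightarrow>
    (side \<times> bool) set \<Rightarrow> (side \<times> bool) set \<Rightarrow> nat" where
  "arrows Tr gl tw A B = card {(t, s, \<epsilon>). t \<in> Tr \<and> s < 3 \<and>
      lift_edge gl tw ((t, s), \<epsilon>) = A \<and> lift_edge gl tw ((t, next_side \<epsilon> s), \<epsilon>) = B}"

definition bQ :: "nat set \<Rightarrow> (side \<Rightarrow> side option) \<Rightarrow> (side \<Rightarrow> bool) \<Rightarrow>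
    (side \<times> bool) set \<Rightarrow> (side \<times> bool) set \<Rightarrow> int" where
  "bQ Tr gl tw A B = int (arrows Tr gl tw A B) - int (arrows Tr gl tw B A)"

definition lifts :: "(side \<Rightarrow> side option) \<Rightarrow> (side \<Rightarrow> bool) \<Rightarrow> side set \<Rightarrow> (side \<times> bool) set set" where
  "lifts gl tw I = lift_edge gl tw ` (I \<times> UNIV)"

definition chosen_lift :: "(side \<Rightarrow> side option) \<Rightarrow> (side \<Rightarrow> bool) \<Rightarrow> side set \<Rightarrow> (side \<times> bool) set" where
  "chosen_lift gl tw J = lift_edge gl tw ((SOME \<sigma>. \<sigma> \<in> J), False)"

definition bsum :: "nat set \<Rightarrow> (side \<Rightarrow> side option) \<Rightarrow> (side \<Rightarrow> bool) \<Rightarrow> side set \<Rightarrow> side set \<Rightarrow> int" where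
  "bsum Tr gl tw I J = (\<Sum>A \<in> lifts gl tw I. bQ Tr gl tw A (chosen_lift gl tw J))"

text \<open>Laurent polynomials with integer coefficients in variables indexed by the edges of T
(arcs give the cluster variables x_1..x_n, boundary segments the coefficient variables
generating R = Z[boundary variables]).\<close>
type_synonym 'v lpoly = "('v \<Rightarrow>\<^sub>0 int) \<Rightarrow>\<^sub>0 int"

definition lmono :: "('v \<Rightarrow>\<^sub>0 int) \<Rightarrow> 'v lpoly" where
  "lmono e = Poly_Mapping.single e 1"

definition lvar :: "'v \<Rightarrow> 'v lpoly" where
  "lvar v = lmono (Poly_Mapping.single v 1)"

definition lconst :: "int \<Rightarrow> 'v lpoly" where
  "lconst c = Poly_Mapping.single 0 c"

text \<open>Membership in R[x_1,..,x_{k-1},x^{\<plusminus>1},x_{k+1},..] (the Laurent variable x is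
represented by the variable k itself).\<close>
definition in_sub :: "'v \<Rightarrow> 'v lpoly \<Rightarrow> bool" where
  "in_sub k p \<longleftrightarrow> (\<forall>m \<in> Poly_Mapping.keys p. \<forall>v. v \<noteq> k \<longrightarrow> 0 \<le> Poly_Mapping.lookup m v)"

definition sub_dvd :: "'v \<Rightarrow> 'v lpoly \<Rightarrow> 'v lpoly \<Rightarrow> bool" where
  "sub_dvd k a b \<longleftrightarrow> (\<exists>c. in_sub k c \<and> b = a * c)"

definition subst_var :: "'v \<Rightarrow> 'v lpoly \<Rightarrow> 'v lpoly \<Rightarrow> 'v lpoly" where
  "subst_var k g p = (\<Sum>m \<in> Poly_Mapping.keys p. lconst (Poly_Mapping.lookup p m) *
      (\<Prod>v \<in> Poly_Mapping.keys m. (if v = k then g else lvar v) ^ nat (Poly_Mapping.lookup m v)))"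

definition exchange_poly :: "nat set \<Rightarrow> (side \<Rightarrow> side option) \<Rightarrow> (side \<Rightarrow> bool) \<Rightarrow> side set \<Rightarrow> side set lpoly" where
  "exchange_poly Tr gl tw J =
     lmono (\<Sum>I \<in> edges Tr gl. Poly_Mapping.single I (max (bsum Tr gl tw I J) 0)) +
     lmono (\<Sum>I \<in> edges Tr gl. Poly_Mapping.single I (max (- bsum Tr gl tw I J) 0))"

text \<open>a_k for F_j: maximal a with F_k^a dividing F_j with x_k replaced by F_k/x.\<close>
definition norm_exp :: "nat set \<Rightarrow> (side \<Rightarrow> side option) \<Rightarrow> (side \<Rightarrow> bool) \<Rightarrow> side set \<Rightarrow> side set \<Rightarrow> nat" where
  "norm_exp Tr gl tw J K = (GREATEST a. sub_dvd K ((exchange_poly Tr gl tw K) ^ a)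
      (subst_var K (exchange_poly Tr gl tw K * lmono (Poly_Mapping.single K (-1)))
         (exchange_poly Tr gl tw J)))"

definition normalized_exchange_poly :: "nat set \<Rightarrow> (side \<Rightarrow> side option) \<Rightarrow> (side \<Rightarrow> bool) \<Rightarrow> side set \<Rightarrow> side set lpoly" where
  "normalized_exchange_poly Tr gl tw J =
     exchange_poly Tr gl tw J *
     lmono (\<Sum>K \<in> arcs Tr gl - {J}. Poly_Mapping.single K (- int (norm_exp Tr gl tw J K)))"

end

theory Submission
  imports Defs Complex_Main
begin


lemma lmono_mult: "lmono a * lmono b = lmono (a + b)"
  by (simp add: lmono_def mult_single)

lemma lmono_zero: "lmono 0 = 1"
  by (simp add: lmono_def)

lemma lconst_mult_lmono: "lconst c * lmono m = Poly_Mapping.single m c"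
  by (simp add: lconst_def lmono_def mult_single)

lemma lvar_power: "lvar v ^ n = lmono (Poly_Mapping.single v (int n))"
proof (induction n)
  case 0 then show ?case by (simp add: lmono_zero)
next
  case (Suc n)
  then show ?case
    by (simp add: lvar_def lmono_mult single_add[symmetric] algebra_simps)
qed

lemma prod_lmono: "finite S \<Longrightarrow> (\<Prod>v\<in>S. lmono (f v)) = lmono (\<Sum>v\<in>S. f v)"
  by (induction S rule: finite_induct) (simp_all add: lmono_zero lmono_mult)

lemma sum_single_keys: "(\<Sum>m\<in>Poly_Mapping.keys p. Poly_Mapping.single m (Poly_Mapping.lookup p m)) = p"
  apply (rule poly_mapping_eqI)
  apply (simp add: lookup_sum lookup_single)
  apply (simp add: when_def in_keys_iff)
  done

lemma sum_single_keys_nat: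
  assumes "\<forall>v. 0 \<le> Poly_Mapping.lookup m v"
  shows "(\<Sum>v\<in>Poly_Mapping.keys m. Poly_Mapping.single v (int (nat (Poly_Mapping.lookup m v)))) = m"
  apply (rule poly_mapping_eqI)
  using assms apply (simp add: lookup_sum lookup_single)
  apply (simp add: when_def in_keys_iff)
  done

lemma subst_id:
  assumes "\<forall>m\<in>Poly_Mapping.keys p. Poly_Mapping.lookup m K = 0 \<and> (\<forall>v. 0 \<le> Poly_Mapping.lookup m v)"
  shows "subst_var K g p = p"
proof -
  have "subst_var K g p = (\<Sum>m\<in>Poly_Mapping.keys p. Poly_Mapping.single m (Poly_Mapping.lookup p m))"
    unfolding subst_var_def
  proof (rule sum.cong[OF refl])
    fix m assume m: "m \<in> Poly_Mapping.keys p"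
    have kK: "K \<notin> Poly_Mapping.keys m" using assms m by (simp add: in_keys_iff)
    have "(\<Prod>v\<in>Poly_Mapping.keys m. (if v = K then g else lvar v) ^ nat (Poly_Mapping.lookup m v))
        = (\<Prod>v\<in>Poly_Mapping.keys m. lmono (Poly_Mapping.single v (int (nat (Poly_Mapping.lookup m v)))))"
      apply (rule prod.cong[OF refl]) using kK by (auto simp: lvar_power)
    also have "\<dots> = lmono m"
      using assms m by (simp add: prod_lmono sum_single_keys)
    finally show "lconst (Poly_Mapping.lookup p m) * (\<Prod>v\<in>Poly_Mapping.keys m. (if v = K then g else lvar v) ^ nat (Poly_Mapping.lookup m v)) = Poly_Mapping.single m (Poly_Mapping.lookup p m)"
      by (simp add: lconst_mult_lmono)
  qed
  then show ?thesis by (simp add: sum_single_keys)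
qed

lemma in_sub_add: "in_sub K p \<Longrightarrow> in_sub K q \<Longrightarrow> in_sub K (p + q)"
  unfolding in_sub_def using keys_add[of p q] by blast

lemma in_sub_zero: "in_sub K 0"
  unfolding in_sub_def by simp

lemma in_sub_mult: "in_sub K p \<Longrightarrow> in_sub K q \<Longrightarrow> in_sub K (p * q)"
  unfolding in_sub_def using keys_mult[of p q] by (fastforce simp: lookup_add)

lemma in_sub_one: "in_sub K 1"
  unfolding in_sub_def by simp

lemma in_sub_sum: "(\<And>x. x \<in> A \<Longrightarrow> in_sub K (f x)) \<Longrightarrow> in_sub K (\<Sum>x\<in>A. f x)"
  by (induction A rule: infinite_finite_induct) (auto simp: in_sub_zero in_sub_add)

lemma in_sub_prod: "(\<And>x. x \<in> A \<Longrightarrow> in_sub K (f x)) \<Longrightarrow> in_sub K (\<Prod>x\<in>A. f x)"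
  by (induction A rule: infinite_finite_induct) (auto simp: in_sub_one in_sub_mult)

lemma in_sub_power: "in_sub K p \<Longrightarrow> in_sub K (p ^ n)"
  by (induction n) (auto simp: in_sub_one in_sub_mult)

lemma in_sub_lmono: "(\<forall>v. v \<noteq> K \<longrightarrow> 0 \<le> Poly_Mapping.lookup m v) \<Longrightarrow> in_sub K (lmono m)"
  unfolding in_sub_def lmono_def by simp

lemma in_sub_lconst: "in_sub K (lconst c)"
  unfolding in_sub_def lconst_def by simp

lemma in_sub_lvar: "in_sub K (lvar v)"
  unfolding in_sub_def lvar_def lmono_def by (simp add: lookup_single when_def)

lemma in_sub_subst: "in_sub K g \<Longrightarrow> in_sub K (subst_var K g p)"
  unfolding subst_var_def
  by (intro in_sub_sum in_sub_mult in_sub_lconst in_sub_prod in_sub_power) (auto simp: in_sub_lvar)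



definition mon :: "('v \<Rightarrow> complex) \<Rightarrow> ('v \<Rightarrow>\<^sub>0 int) \<Rightarrow> complex" where
  "mon val m = (\<Prod>u\<in>Poly_Mapping.keys m. val u powi Poly_Mapping.lookup m u)"

definition pmon :: "('v \<Rightarrow> complex) \<Rightarrow> ('v \<Rightarrow>\<^sub>0 int) \<Rightarrow> complex" where
  "pmon val m = (\<Prod>u\<in>Poly_Mapping.keys m. val u ^ nat (Poly_Mapping.lookup m u))"

definition lin :: "(('v \<Rightarrow>\<^sub>0 int) \<Rightarrow> complex) \<Rightarrow> 'v lpoly \<Rightarrow> complex" where
  "lin f p = (\<Sum>m\<in>Poly_Mapping.keys p. of_int (Poly_Mapping.lookup p m) * f m)"

abbreviation ev where "ev val \<equiv> lin (mon val)"

lemma mon_superset: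
  assumes "finite S" "Poly_Mapping.keys m \<subseteq> S"
  shows "mon val m = (\<Prod>u\<in>S. val u powi Poly_Mapping.lookup m u)"
  unfolding mon_def
  by (rule prod.mono_neutral_left[OF assms]) (simp add: in_keys_iff)

lemma mon_add:
  assumes "\<forall>u. val u \<noteq> 0"
  shows "mon val (m + n) = mon val m * mon val n"
proof -
  let ?S = "Poly_Mapping.keys m \<union> Poly_Mapping.keys n"
  have f: "finite ?S" by simp
  have "Poly_Mapping.keys (m + n) \<subseteq> ?S" by (rule keys_add)
  then have "mon val (m + n) = (\<Prod>u\<in>?S. val u powi (Poly_Mapping.lookup m u + Poly_Mapping.lookup n u))"
    by (simp add: mon_superset[OF f] lookup_add)
  also have "\<dots> = (\<Prod>u\<in>?S. val u powi Poly_Mapping.lookup m u * val u powi Poly_Mapping.lookup n u)"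
    using assms by (simp add: power_int_add)
  also have "\<dots> = mon val m * mon val n"
    by (simp add: prod.distrib mon_superset[OF f])
  finally show ?thesis .
qed

lemma mon_zero[simp]: "mon val 0 = 1"
  by (simp add: mon_def)

lemma mon_cong: "(\<And>u. u \<in> Poly_Mapping.keys m \<Longrightarrow> f u = g u) \<Longrightarrow> mon f m = mon g m"
  unfolding mon_def by simp

lemma pmon_cong: "(\<And>u. u \<in> Poly_Mapping.keys m \<Longrightarrow> f u = g u) \<Longrightarrow> pmon f m = pmon g m"
  unfolding pmon_def by simp

lemma lin_superset:
  assumes "finite S" "Poly_Mapping.keys p \<subseteq> S"
  shows "lin f p = (\<Sum>m\<in>S. of_int (Poly_Mapping.lookup p m) * f m)"
  unfolding lin_def
  by (rule sum.mono_neutral_left[OF assms]) (simp add: in_keys_iff)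

lemma lin_add: "lin f (p + q) = lin f p + lin f q"
proof -
  let ?S = "Poly_Mapping.keys p \<union> Poly_Mapping.keys q"
  have f: "finite ?S" by simp
  have "Poly_Mapping.keys (p + q) \<subseteq> ?S" by (rule keys_add)
  then show ?thesis
    by (simp add: lin_superset[OF f] lookup_add sum.distrib algebra_simps)
qed

lemma lin_zero[simp]: "lin f 0 = 0"
  by (simp add: lin_def)

lemma lin_sum: "lin f (\<Sum>x\<in>A. g x) = (\<Sum>x\<in>A. lin f (g x))"
  by (induction A rule: infinite_finite_induct) (simp_all add: lin_add)

lemma lin_single: "lin f (Poly_Mapping.single m c) = of_int c * f m"
  by (simp add: lin_def)

lemma lin_lmono: "lin f (lmono m) = f m"
  by (simp add: lin_def lmono_def)

lemma ev_mult:
  assumes "\<forall>u. val u \<noteq> 0"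
  shows "ev val (p * q) = ev val p * ev val q"
proof -
  have "p * q = (\<Sum>m\<in>Poly_Mapping.keys p. Poly_Mapping.single m (Poly_Mapping.lookup p m)) *
       (\<Sum>n\<in>Poly_Mapping.keys q. Poly_Mapping.single n (Poly_Mapping.lookup q n))"
    by (simp add: sum_single_keys)
  also have "\<dots> = (\<Sum>m\<in>Poly_Mapping.keys p. \<Sum>n\<in>Poly_Mapping.keys q.
       Poly_Mapping.single (m + n) (Poly_Mapping.lookup p m * Poly_Mapping.lookup q n))"
    by (simp add: sum_product mult_single)
  finally have "ev val (p * q) = (\<Sum>m\<in>Poly_Mapping.keys p. \<Sum>n\<in>Poly_Mapping.keys q.
       of_int (Poly_Mapping.lookup p m) * mon val m * (of_int (Poly_Mapping.lookup q n) * mon val n))"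
    by (simp add: lin_sum lin_single mon_add[OF assms] algebra_simps)
  also have "\<dots> = ev val p * ev val q"
    by (simp add: lin_def sum_product)
  finally show ?thesis .
qed

lemma ev_one[simp]: "ev val 1 = 1"
  using lin_lmono[of "mon val" 0] by (simp add: lmono_zero)

lemma ev_power: "\<forall>u. val u \<noteq> 0 \<Longrightarrow> ev val (p ^ n) = ev val p ^ n"
  by (induction n) (simp_all add: ev_mult)

lemma ev_prod: "\<forall>u. val u \<noteq> 0 \<Longrightarrow> ev val (\<Prod>x\<in>A. g x) = (\<Prod>x\<in>A. ev val (g x))"
  by (induction A rule: infinite_finite_induct) (simp_all add: ev_mult)

lemma ev_lconst: "ev val (lconst c) = of_int c"
  by (simp add: lconst_def lin_single)

lemma ev_lvar: "ev val (lvar v) = val v"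
  by (simp add: lvar_def lin_lmono mon_def)

lemma ev_if: "ev val (if b then x else y) = (if b then ev val x else ev val y)"
  by simp

lemma ev_subst:
  assumes "\<forall>u. val u \<noteq> 0"
  shows "ev val (subst_var K g p) = lin (pmon (val(K := ev val g))) p"
proof -
  have "ev val (subst_var K g p) = (\<Sum>m\<in>Poly_Mapping.keys p. of_int (Poly_Mapping.lookup p m) *
     (\<Prod>v\<in>Poly_Mapping.keys m. (if v = K then ev val g else val v) ^ nat (Poly_Mapping.lookup m v)))"
    unfolding subst_var_def
    by (simp only: lin_sum ev_mult[OF assms] ev_lconst ev_prod[OF assms] ev_power[OF assms] ev_if ev_lvar
       del: if_image_distrib)
  then show ?thesis
    unfolding pmon_def lin_def[of "\<lambda>m. \<Prod>u\<in>Poly_Mapping.keys m. (val(K := ev val g)) u ^ nat (Poly_Mapping.lookup m u)" p]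
    by (simp only: fun_upd_apply)
qed



definition zeta :: "int \<Rightarrow> complex" where "zeta n = (if \<bar>n\<bar> = 1 then -1 else \<i>)"

lemma zeta_nz: "zeta n \<noteq> 0" by (simp add: zeta_def)

lemma int_cases5: "\<bar>n::int\<bar> \<le> 2 \<Longrightarrow> n = -2 \<or> n = -1 \<or> n = 0 \<or> n = 1 \<or> n = 2"
  by auto

lemma zeta_root: "n \<noteq> 0 \<Longrightarrow> \<bar>n\<bar> \<le> 2 \<Longrightarrow> zeta n powi n = -1"
  using int_cases5[of n] by (auto simp: zeta_def power_int_def power2_eq_square)

lemma zeta_other: "n \<noteq> 0 \<Longrightarrow> \<bar>n\<bar> \<le> 2 \<Longrightarrow> \<bar>m\<bar> \<le> 2 \<Longrightarrow> m \<noteq> n \<Longrightarrow> m \<noteq> -n \<Longrightarrow> zeta n powi m \<noteq> -1"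
  using int_cases5[of n] int_cases5[of m]
  by (auto simp: zeta_def power_int_def power2_eq_square complex_eq_iff)

lemma root_i: "n \<noteq> 0 \<Longrightarrow> \<bar>n\<bar> \<le> 2 \<Longrightarrow> \<exists>z::complex. z \<noteq> 0 \<and> z powi n = \<i>"
proof -
  assume n: "n \<noteq> 0" "\<bar>n\<bar> \<le> 2"
  then consider "n = -2" | "n = -1" | "n = 1" | "n = 2" by linarith
  then show ?thesis
  proof cases
    case 1 then show ?thesis
      by (intro exI[of _ "csqrt (-\<i>)"]) (simp add: power_int_def power2_csqrt inverse_eq_divide power_divide complex_eq_iff)
  next
    case 2 then show ?thesis
      by (intro exI[of _ "-\<i>"]) (simp add: power_int_def inverse_eq_divide)
  next
    case 3 then show ?thesis by (intro exI[of _ "\<i>"]) simp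
  next
    case 4
    have e: "(csqrt \<i>)^2 = \<i>" by (rule power2_csqrt)
    then have "csqrt \<i> \<noteq> 0" by (metis complex_i_not_zero zero_power2)
    with e 4 show ?thesis
      by (intro exI[of _ "csqrt \<i>"]) (simp add: power_int_def del: csqrt_ii)
  qed
qed

lemma mon_outside:
  assumes "finite D" "\<forall>u. u \<notin> D \<longrightarrow> val u = 1"
  shows "mon val m = (\<Prod>u\<in>D. val u powi Poly_Mapping.lookup m u)"
proof -
  have f: "finite (Poly_Mapping.keys m \<union> D)" using assms by simp
  have "mon val m = (\<Prod>u\<in>Poly_Mapping.keys m \<union> D. val u powi Poly_Mapping.lookup m u)"
    by (rule mon_superset[OF f]) auto
  also have "\<dots> = (\<Prod>u\<in>D. val u powi Poly_Mapping.lookup m u)"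
    by (rule prod.mono_neutral_right[OF f]) (use assms in auto)
  finally show ?thesis .
qed

lemma mon_one_point: "mon (\<lambda>u. if u = w then x else 1) m = x powi Poly_Mapping.lookup m w"
  by (subst mon_outside[of "{w}"]) auto

lemma mon_two_point: "w1 \<noteq> w2 \<Longrightarrow>
   mon (\<lambda>u. if u = w1 then x1 else if u = w2 then x2 else 1) m =
   x1 powi Poly_Mapping.lookup m w1 * x2 powi Poly_Mapping.lookup m w2"
  by (subst mon_outside[of "{w1, w2}"]) auto

lemma pmon_one_point: "pmon (\<lambda>u. if u = w then x else 1) m = x ^ nat (Poly_Mapping.lookup m w)"
proof (cases "w \<in> Poly_Mapping.keys m")
  case True
  then show ?thesis unfolding pmon_def
    by (simp add: prod.remove[OF finite_keys True])
next
  case False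
  then show ?thesis unfolding pmon_def by (auto simp: in_keys_iff intro!: prod.neutral)
qed

lemma pmon_eq_mon: "(\<forall>u. 0 \<le> Poly_Mapping.lookup m u) \<Longrightarrow> pmon val m = mon val m"
  unfolding pmon_def mon_def
  by (intro prod.cong refl) (simp add: power_int_def)

lemma pmon_zeroK: "val K = 0 \<Longrightarrow> 0 < Poly_Mapping.lookup m K \<Longrightarrow> pmon val m = 0"
  unfolding pmon_def
  by (rule prod_zero) (auto simp: in_keys_iff intro!: bexI[of _ K])

lemma mon_nz: "\<forall>u. val u \<noteq> 0 \<Longrightarrow> mon val m \<noteq> 0"
  unfolding mon_def by (simp add: prod_zero_iff)

lemma pmon_nz: "\<forall>u. u \<in> Poly_Mapping.keys m \<longrightarrow> val u \<noteq> 0 \<Longrightarrow> pmon val m \<noteq> 0"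
  unfolding pmon_def by (simp add: prod_zero_iff)



lemma point_one:
  assumes "Poly_Mapping.lookup \<alpha> v \<noteq> 0" "\<bar>Poly_Mapping.lookup \<alpha> v\<bar> \<le> 2"
  shows "mon (\<lambda>u. if u = v then zeta (Poly_Mapping.lookup \<alpha> v) else 1) \<alpha> = -1"
  by (simp add: mon_one_point zeta_root assms)

lemma key_point:
  fixes \<alpha> \<beta> :: "'v \<Rightarrow>\<^sub>0 int"
  assumes ba: "\<forall>v. \<bar>Poly_Mapping.lookup \<alpha> v\<bar> \<le> 2" and bb: "\<forall>v. \<bar>Poly_Mapping.lookup \<beta> v\<bar> \<le> 2"
    and a0: "\<alpha> \<noteq> 0" and ab1: "\<beta> \<noteq> \<alpha>" and ab2: "\<beta> \<noteq> - \<alpha>"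
  shows "\<exists>val. (\<forall>u. val u \<noteq> 0) \<and> mon val \<alpha> = -1 \<and> mon val \<beta> \<noteq> -1"
proof -
  let ?a = "Poly_Mapping.lookup \<alpha>" and ?b = "Poly_Mapping.lookup \<beta>"
  obtain v0 where v0: "?a v0 \<noteq> 0" using a0 by (metis lookup_zero poly_mapping_eqI)
  show ?thesis
  proof (cases "\<exists>v. ?a v \<noteq> 0 \<and> ?b v \<noteq> ?a v \<and> ?b v \<noteq> - ?a v")
    case True
    then obtain v where v: "?a v \<noteq> 0" "?b v \<noteq> ?a v" "?b v \<noteq> - ?a v" by blast
    let ?val = "\<lambda>u. if u = v then zeta (?a v) else 1"
    show ?thesis
      apply (rule exI[of _ ?val])
      using v ba bb by (simp add: mon_one_point zeta_root zeta_other zeta_nz)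
  next
    case nA: False
    show ?thesis
    proof (cases "\<exists>u. ?a u = 0 \<and> ?b u \<noteq> 0")
      case True
      then obtain u where u: "?a u = 0" "?b u \<noteq> 0" by blast
      have uv: "u \<noteq> v0" using u v0 by auto
      let ?val1 = "\<lambda>w. if w = v0 then zeta (?a v0) else if w = u then 1 else 1"
      let ?val2 = "\<lambda>w. if w = v0 then zeta (?a v0) else if w = u then zeta (?b u) else 1"
      have m1: "mon ?val1 \<alpha> = -1" "mon ?val2 \<alpha> = -1"
        using mon_two_point[OF uv[symmetric], of "zeta (?a v0)"] u v0 ba
        by (simp_all add: zeta_root)
      have m2: "mon ?val2 \<beta> = - mon ?val1 \<beta>"
        using mon_two_point[OF uv[symmetric], of "zeta (?a v0)"] u bb
        by (simp add: zeta_root)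
      show ?thesis
      proof (cases "mon ?val1 \<beta> = -1")
        case True
        then show ?thesis using m1 m2
          by (intro exI[of _ ?val2]) (auto simp: zeta_nz)
      next
        case False
        then show ?thesis using m1
          by (intro exI[of _ ?val1]) (auto simp: zeta_nz)
      qed
    next
      case nB: False
      obtain u where u: "?b u \<noteq> ?a u" using ab1 by (metis poly_mapping_eqI)
      obtain v where v: "?b v \<noteq> - ?a v" using ab2 by (metis poly_mapping_eqI lookup_uminus)
      have ua: "?a u \<noteq> 0" "?b u = - ?a u" using nA nB u by (metis add.inverse_neutral)+
      have va: "?a v \<noteq> 0" "?b v = ?a v" using nA nB v by (metis add.inverse_neutral)+
      have uv: "u \<noteq> v" using ua va u by auto
      obtain zu where zu: "zu \<noteq> 0" "zu powi ?a u = \<i>" using root_i[of "?a u"] ua ba by auto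
      obtain zv where zv: "zv \<noteq> 0" "zv powi ?a v = \<i>" using root_i[of "?a v"] va ba by auto
      let ?val = "\<lambda>w. if w = u then zu else if w = v then zv else 1"
      have "mon ?val \<alpha> = -1"
        using mon_two_point[OF uv, of zu zv] zu zv by simp
      moreover have "mon ?val \<beta> = 1"
        using mon_two_point[OF uv, of zu zv] zu zv ua va
        by (simp add: power_int_minus)
      ultimately show ?thesis using zu zv
        by (intro exI[of _ ?val]) auto
    qed
  qed
qed



lemma ev_Ints:
  assumes "in_sub K p" "val K = 1" "\<forall>u. val u \<in> \<int>"
  shows "ev val p \<in> \<int>"
  unfolding lin_def mon_def
proof (intro Ints_sum Ints_mult Ints_prod)
  fix m u assume m: "m \<in> Poly_Mapping.keys p" and u: "u \<in> Poly_Mapping.keys m"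
  show "val u powi Poly_Mapping.lookup m u \<in> \<int>"
  proof (cases "u = K")
    case True then show ?thesis using assms by simp
  next
    case False
    then have "0 \<le> Poly_Mapping.lookup m u" using assms(1) m unfolding in_sub_def by blast
    then have "val u powi Poly_Mapping.lookup m u = val u ^ nat (Poly_Mapping.lookup m u)"
      by (simp add: power_int_def)
    then show ?thesis using assms(3) by simp
  qed
qed simp

lemma recover: "0 \<le> (x::int) \<Longrightarrow> 0 \<le> y \<Longrightarrow> x = 0 \<or> y = 0 \<Longrightarrow> x = max (x - y) 0"
  by auto

lemma keys_lmono2: "Poly_Mapping.keys (lmono a + lmono b) \<subseteq> {a, b}"
  using keys_add[of "lmono a" "lmono b"] by (auto simp: lmono_def)

lemma lin_two: "lin f (lmono a + lmono b) = f a + f b"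
  by (simp add: lin_add lin_lmono)

lemma mon_const1: "mon (\<lambda>_. 1) m = 1"
  by (simp add: mon_def)

lemma odd_contra:
  fixes z :: int and n k :: nat
  assumes "n \<ge> 1" "2 ^ n * z = 2 ^ k + 1" "k \<ge> 1"
  shows False
proof -
  have "even (2 ^ n * z)" using assms(1) by (simp add: dvd_mult2)
  moreover have "odd ((2::int) ^ k + 1)" using assms(3) by simp
  ultimately show False using assms(2) by simp
qed

lemma toint2: "(2::complex) ^ n * of_int z = 2 ^ k + 1 \<Longrightarrow> (2::int) ^ n * z = 2 ^ k + 1"
proof -
  assume h: "(2::complex) ^ n * of_int z = 2 ^ k + 1"
  have "(of_int ((2::int) ^ n * z) :: complex) = of_int ((2::int) ^ k + 1)" using h by simp
  then show ?thesis by (simp only: of_int_eq_iff)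
qed

lemma alg_main:
  fixes a b c d :: "'v \<Rightarrow>\<^sub>0 int" and K :: 'v
  assumes na: "\<forall>v. 0 \<le> Poly_Mapping.lookup a v \<and> Poly_Mapping.lookup a v \<le> 2"
    and nb: "\<forall>v. 0 \<le> Poly_Mapping.lookup b v \<and> Poly_Mapping.lookup b v \<le> 2"
    and nc: "\<forall>v. 0 \<le> Poly_Mapping.lookup c v \<and> Poly_Mapping.lookup c v \<le> 2"
    and nd: "\<forall>v. 0 \<le> Poly_Mapping.lookup d v \<and> Poly_Mapping.lookup d v \<le> 2"
    and dab: "\<forall>v. Poly_Mapping.lookup a v = 0 \<or> Poly_Mapping.lookup b v = 0"
    and dcd: "\<forall>v. Poly_Mapping.lookup c v = 0 \<or> Poly_Mapping.lookup d v = 0"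
    and cK: "Poly_Mapping.lookup c K = 0" and dK: "Poly_Mapping.lookup d K = 0"
  shows "(GREATEST n. sub_dvd K ((lmono c + lmono d) ^ n)
            (subst_var K ((lmono c + lmono d) * lmono (Poly_Mapping.single K (-1))) (lmono a + lmono b))) = 0
         \<longleftrightarrow> lmono a + lmono b \<noteq> lmono c + lmono d"
proof -
  define FJ where "FJ = lmono a + lmono b"
  define FK where "FK = lmono c + lmono d"
  define g where "g = FK * lmono (Poly_Mapping.single K (-1))"
  define T where "T = subst_var K g FJ"
  define P where "P n = sub_dvd K (FK ^ n) T" for n
  have gsub: "in_sub K g" unfolding g_def FK_def
    by (intro in_sub_mult in_sub_add in_sub_lmono) (use nc nd in \<open>auto simp: lookup_single when_def\<close>)
  have Tsub: "in_sub K T" unfolding T_def by (rule in_sub_subst[OF gsub])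
  have evFK: "ev val FK = mon val c + mon val d" for val
    unfolding FK_def by (rule lin_two)
  have evg: "ev val g = (mon val c + mon val d) * val K powi (-1)" if "\<forall>u. val u \<noteq> 0" for val
    unfolding g_def using that
    by (simp add: ev_mult evFK lin_lmono mon_def)
  have evT: "ev val T = pmon (val(K := ev val g)) a + pmon (val(K := ev val g)) b"
    if "\<forall>u. val u \<noteq> 0" for val
    unfolding T_def FJ_def using that by (simp add: ev_subst lin_two)
  have Pdiv: "ev val T = ev val FK ^ n * ev val c0 \<and> in_sub K c0"
    if "P n" "\<forall>u. val u \<noteq> 0" "T = FK ^ n * c0" "in_sub K c0" for n val c0
    using that by (simp add: ev_mult ev_power)
  have Pobt: "\<exists>c0. T = FK ^ n * c0 \<and> in_sub K c0" if "P n" for n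
    using that unfolding P_def sub_dvd_def by blast
  have nnK: "\<forall>m\<in>Poly_Mapping.keys FK. Poly_Mapping.lookup m K = 0 \<and> (\<forall>v. 0 \<le> Poly_Mapping.lookup m v)"
    using keys_lmono2[of c d] nc nd cK dK unfolding FK_def by auto
  show ?thesis
    unfolding FJ_def[symmetric] FK_def[symmetric] g_def[symmetric] T_def[symmetric] P_def[symmetric]
  proof
    assume G: "(GREATEST n. P n) = 0"
    show "FJ \<noteq> FK"
    proof
      assume eq: "FJ = FK"
      have TF: "T = FK" unfolding T_def eq by (rule subst_id[OF nnK])
      have P1: "P 1" unfolding P_def sub_dvd_def TF
        by (rule exI[of _ 1]) (simp add: in_sub_one)
      have bnd: "n \<le> 1" if Pn: "P n" for n
      proof (rule ccontr)
        assume "\<not> n \<le> 1"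
        then have n2: "n \<ge> 2" by simp
        obtain c0 where c0: "T = FK ^ n * c0" "in_sub K c0" using Pobt[OF Pn] by blast
        have ev: "ev (\<lambda>_. 1) T = ev (\<lambda>_. 1) FK ^ n * ev (\<lambda>_. 1) c0"
          using c0 by (simp add: ev_mult ev_power)
        have e2: "ev (\<lambda>_. 1) FK = 2" by (simp add: evFK mon_const1)
        have "ev (\<lambda>_. 1) c0 \<in> \<int>" by (rule ev_Ints[OF c0(2)]) auto
        then obtain z where z: "ev (\<lambda>_. 1) c0 = of_int z" by (auto elim: Ints_cases)
        have "(2::complex) = 2 ^ n * of_int z" using ev e2 z TF by simp
        then have "(of_int 2 :: complex) = of_int (2 ^ n * z)" by simp
        then have "(2::int) = 2 ^ n * z" by (simp only: of_int_eq_iff)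
        moreover obtain k where "n = k + 2" using n2 by (metis le_add_diff_inverse2)
        ultimately have "(2::int) = 4 * (2 ^ k * z)" by (simp add: power_add)
        then have "(4::int) dvd 2" by (metis dvd_triv_left)
        then show False by simp
      qed
      have "(GREATEST n. P n) = 1"
        using P1 bnd by (intro Greatest_equality[where P=P]) auto
      with G show False by simp
    qed
  next
    assume ne: "FJ \<noteq> FK"
    have P0: "P 0" unfolding P_def sub_dvd_def
      by (rule exI[of _ T]) (simp add: Tsub)
    have notP: False if Pn: "P n" "n \<ge> 1" for n
    proof -
      obtain c0 where c0: "T = FK ^ n * c0" "in_sub K c0" using Pobt[OF Pn(1)] by blast
      have evTn: "ev val T = ev val FK ^ n * ev val c0" if "\<forall>u. val u \<noteq> 0" for val
        using c0 that by (simp add: ev_mult ev_power)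
      have keysK: "u \<noteq> K" if "u \<in> Poly_Mapping.keys m" "Poly_Mapping.lookup m K = 0" for u m
        using that by (auto simp: in_keys_iff)
      show False
      proof (cases "c = 0 \<and> d = 0")
        case True
        have evFK2: "ev val FK = 2" for val using True by (simp add: evFK)
        have intform: "\<exists>z. ev val T = 2 ^ n * of_int z"
          if v1: "val K = 1" "\<forall>u. val u \<in> \<int>" "\<forall>u. val u \<noteq> 0" for val
        proof -
          have "ev val c0 \<in> \<int>" by (rule ev_Ints[OF c0(2) v1(1,2)])
          then obtain z where "ev val c0 = of_int z" by (auto elim: Ints_cases)
          then show ?thesis using evTn[OF v1(3)] evFK2 by auto
        qed
        consider (aK) "Poly_Mapping.lookup a K > 0" | (bK) "Poly_Mapping.lookup b K > 0"
          | (none) "Poly_Mapping.lookup a K = 0" "Poly_Mapping.lookup b K = 0"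
          using na[rule_format, of K] nb[rule_format, of K] by (metis le_less)
        then show False
        proof cases
          case aK
          let ?val = "\<lambda>_::'v. (1::complex)"
          have bK0: "Poly_Mapping.lookup b K = 0" using dab[rule_format, of K] aK by auto
          have vv: "?val(K := ev ?val g) = (\<lambda>u. if u = K then 2 else 1)"
            using evg[of ?val] evFK2[of ?val] by (auto simp: fun_eq_iff evFK)
          have "ev ?val T = 2 ^ nat (Poly_Mapping.lookup a K) + 1"
            using evT[of ?val] bK0 by (simp add: vv pmon_one_point)
          moreover obtain z where "ev ?val T = 2 ^ n * of_int z" using intform[of ?val] by auto
          ultimately have "(2::int) ^ n * z = 2 ^ nat (Poly_Mapping.lookup a K) + 1"
            by (intro toint2) simp
          then show False using odd_contra[of n z "nat (Poly_Mapping.lookup a K)"] Pn(2) aK by linarith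
        next
          case bK
          let ?val = "\<lambda>_::'v. (1::complex)"
          have aK0: "Poly_Mapping.lookup a K = 0" using dab[rule_format, of K] bK by auto
          have vv: "?val(K := ev ?val g) = (\<lambda>u. if u = K then 2 else 1)"
            using evg[of ?val] evFK2[of ?val] by (auto simp: fun_eq_iff evFK)
          have "ev ?val T = 2 ^ nat (Poly_Mapping.lookup b K) + 1"
            using evT[of ?val] aK0 by (simp add: vv pmon_one_point)
          moreover obtain z where "ev ?val T = 2 ^ n * of_int z" using intform[of ?val] by auto
          ultimately have "(2::int) ^ n * z = 2 ^ nat (Poly_Mapping.lookup b K) + 1"
            by (intro toint2) simp
          then show False using odd_contra[of n z "nat (Poly_Mapping.lookup b K)"] Pn(2) bK by linarith
        next
          case none
          have "a \<noteq> b"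
          proof
            assume "a = b"
            then have "a = 0" "b = 0" using dab by (auto intro!: poly_mapping_eqI)
            then show False using ne True unfolding FJ_def FK_def by simp
          qed
          then obtain v where v: "Poly_Mapping.lookup a v \<noteq> Poly_Mapping.lookup b v"
            by (metis poly_mapping_eqI)
          have vK: "v \<noteq> K" using v none by auto
          let ?val = "\<lambda>u::'v. if u = v then (2::complex) else 1"
          have nz: "\<forall>u. ?val u \<noteq> 0" by simp
          have egv: "ev ?val g = 2" using evg[OF nz] evFK2[of ?val] vK by (simp add: evFK)
          have pa: "pmon (?val(K := ev ?val g)) a = 2 ^ nat (Poly_Mapping.lookup a v)"
            by (subst pmon_cong[where g="?val"]) (use keysK none in \<open>auto simp: pmon_one_point\<close>)
          have pb: "pmon (?val(K := ev ?val g)) b = 2 ^ nat (Poly_Mapping.lookup b v)"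
            by (subst pmon_cong[where g="?val"]) (use keysK none in \<open>auto simp: pmon_one_point\<close>)
          have ints: "\<forall>u. ?val u \<in> \<int>" by (simp split: if_split)
          obtain z where z: "ev ?val T = 2 ^ n * of_int z" using intform[of ?val, OF _ ints nz] vK by auto
          consider "Poly_Mapping.lookup a v = 0" "Poly_Mapping.lookup b v > 0"
            | "Poly_Mapping.lookup b v = 0" "Poly_Mapping.lookup a v > 0"
            using v dab[rule_format, of v] na[rule_format, of v] nb[rule_format, of v] by (metis le_less)
          then show False
          proof cases
            case 1
            then have "(2::complex) ^ n * of_int z = 2 ^ nat (Poly_Mapping.lookup b v) + 1"
              using evT[OF nz] pa pb z by simp
            then have "(2::int) ^ n * z = 2 ^ nat (Poly_Mapping.lookup b v) + 1"
              by (intro toint2) simp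
            then show False using odd_contra[of n z "nat (Poly_Mapping.lookup b v)"] Pn(2) 1 by linarith
          next
            case 2
            then have "(2::complex) ^ n * of_int z = 2 ^ nat (Poly_Mapping.lookup a v) + 1"
              using evT[OF nz] pa pb z by simp
            then have "(2::int) ^ n * z = 2 ^ nat (Poly_Mapping.lookup a v) + 1"
              by (intro toint2) simp
            then show False using odd_contra[of n z "nat (Poly_Mapping.lookup a v)"] Pn(2) 2 by linarith
          qed
        qed
      next
        case False
        define \<alpha> where "\<alpha> = c - d"
        have cda: "c = d + \<alpha>" unfolding \<alpha>_def by simp
        have a0: "\<alpha> \<noteq> 0"
        proof
          assume "\<alpha> = 0"
          then have "c = d" using cda by simp
          then have "c = 0 \<and> d = 0" using dcd by (auto intro!: poly_mapping_eqI)
          with False show False by simp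
        qed
        have ba: "\<forall>v. \<bar>Poly_Mapping.lookup \<alpha> v\<bar> \<le> 2"
        proof
          fix v show "\<bar>Poly_Mapping.lookup \<alpha> v\<bar> \<le> 2"
            using nc[rule_format, of v] nd[rule_format, of v] unfolding \<alpha>_def by (simp add: lookup_minus abs_if)
        qed
        have zeroT: "pmon (val(K := 0)) a + pmon (val(K := 0)) b = 0"
          if nz: "\<forall>u. val u \<noteq> 0" and ma: "mon val \<alpha> = -1" for val
        proof -
          have "ev val FK = 0" using ma by (simp add: evFK cda mon_add[OF nz])
          then have "ev val g = 0" using evg[OF nz] evFK by simp
          moreover have "ev val T = 0" using evTn[OF nz] \<open>ev val FK = 0\<close> Pn(2) by simp
          ultimately show ?thesis using evT[OF nz] by simp
        qed
        obtain v0 where v0: "Poly_Mapping.lookup \<alpha> v0 \<noteq> 0" using a0 by (metis lookup_zero poly_mapping_eqI)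
        let ?v1 = "\<lambda>u. if u = v0 then zeta (Poly_Mapping.lookup \<alpha> v0) else 1"
        have nz1: "\<forall>u. ?v1 u \<noteq> 0" by (simp add: zeta_nz)
        have m1: "mon ?v1 \<alpha> = -1" using point_one[OF v0] ba by simp
        consider (aK) "Poly_Mapping.lookup a K > 0" | (bK) "Poly_Mapping.lookup b K > 0"
          | (none) "Poly_Mapping.lookup a K = 0" "Poly_Mapping.lookup b K = 0"
          using na[rule_format, of K] nb[rule_format, of K] by (metis le_less)
        then show False
        proof cases
          case aK
          have bK0: "Poly_Mapping.lookup b K = 0" using dab[rule_format, of K] aK by auto
          have "pmon (?v1(K := 0)) a = 0" by (rule pmon_zeroK) (use aK in auto)
          moreover have "pmon (?v1(K := 0)) b \<noteq> 0"
            by (rule pmon_nz) (use keysK[OF _ bK0] in \<open>auto simp: zeta_nz\<close>)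
          ultimately show False using zeroT[OF nz1 m1] by simp
        next
          case bK
          have aK0: "Poly_Mapping.lookup a K = 0" using dab[rule_format, of K] bK by auto
          have "pmon (?v1(K := 0)) b = 0" by (rule pmon_zeroK) (use bK in auto)
          moreover have "pmon (?v1(K := 0)) a \<noteq> 0"
            by (rule pmon_nz) (use keysK[OF _ aK0] in \<open>auto simp: zeta_nz\<close>)
          ultimately show False using zeroT[OF nz1 m1] by simp
        next
          case none
          define \<beta> where "\<beta> = a - b"
          have abb: "a = b + \<beta>" unfolding \<beta>_def by simp
          have bb: "\<forall>v. \<bar>Poly_Mapping.lookup \<beta> v\<bar> \<le> 2"
          proof
            fix v show "\<bar>Poly_Mapping.lookup \<beta> v\<bar> \<le> 2"
              using na[rule_format, of v] nb[rule_format, of v] unfolding \<beta>_def by (simp add: lookup_minus abs_if)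
          qed
          have ab1: "\<beta> \<noteq> \<alpha>"
          proof
            assume "\<beta> = \<alpha>"
            then have e: "\<forall>v. Poly_Mapping.lookup a v - Poly_Mapping.lookup b v = Poly_Mapping.lookup c v - Poly_Mapping.lookup d v"
              unfolding \<alpha>_def \<beta>_def by (metis lookup_minus)
            have "a = c" "b = d"
            proof (rule_tac[!] poly_mapping_eqI)
              fix v
              have r: "Poly_Mapping.lookup a v = max (Poly_Mapping.lookup a v - Poly_Mapping.lookup b v) 0"
                 "Poly_Mapping.lookup b v = max (Poly_Mapping.lookup b v - Poly_Mapping.lookup a v) 0"
                 "Poly_Mapping.lookup c v = max (Poly_Mapping.lookup c v - Poly_Mapping.lookup d v) 0"
                 "Poly_Mapping.lookup d v = max (Poly_Mapping.lookup d v - Poly_Mapping.lookup c v) 0"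
                using na[rule_format, of v] nb[rule_format, of v] nc[rule_format, of v] nd[rule_format, of v]
                  dab[rule_format, of v] dcd[rule_format, of v] by auto
              show "Poly_Mapping.lookup a v = Poly_Mapping.lookup c v"
                using r(1,3) e[rule_format, of v] by simp
              show "Poly_Mapping.lookup b v = Poly_Mapping.lookup d v"
                using r(2,4) e[rule_format, of v] by (simp add: algebra_simps)
            qed
            then show False using ne unfolding FJ_def FK_def by simp
          qed
          have ab2: "\<beta> \<noteq> - \<alpha>"
          proof
            assume "\<beta> = - \<alpha>"
            then have e: "\<forall>v. Poly_Mapping.lookup a v - Poly_Mapping.lookup b v = Poly_Mapping.lookup d v - Poly_Mapping.lookup c v"
              unfolding \<alpha>_def \<beta>_def by (metis lookup_minus minus_diff_eq lookup_uminus)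
            have "a = d" "b = c"
            proof (rule_tac[!] poly_mapping_eqI)
              fix v
              have r: "Poly_Mapping.lookup a v = max (Poly_Mapping.lookup a v - Poly_Mapping.lookup b v) 0"
                 "Poly_Mapping.lookup b v = max (Poly_Mapping.lookup b v - Poly_Mapping.lookup a v) 0"
                 "Poly_Mapping.lookup c v = max (Poly_Mapping.lookup c v - Poly_Mapping.lookup d v) 0"
                 "Poly_Mapping.lookup d v = max (Poly_Mapping.lookup d v - Poly_Mapping.lookup c v) 0"
                using na[rule_format, of v] nb[rule_format, of v] nc[rule_format, of v] nd[rule_format, of v]
                  dab[rule_format, of v] dcd[rule_format, of v] by auto
              show "Poly_Mapping.lookup a v = Poly_Mapping.lookup d v"
                using r(1,4) e[rule_format, of v] by simp
              show "Poly_Mapping.lookup b v = Poly_Mapping.lookup c v"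
                using r(2,3) e[rule_format, of v] by (simp add: algebra_simps)
            qed
            then show False using ne unfolding FJ_def FK_def by (simp add: add.commute)
          qed
          obtain val where nz: "\<forall>u. val u \<noteq> 0" and ma: "mon val \<alpha> = -1" and mb: "mon val \<beta> \<noteq> -1"
            using key_point[OF ba bb a0 ab1 ab2] by blast
          have pa: "pmon (val(K := 0)) a = mon val a"
            by (subst pmon_cong[where g=val]) (use keysK none na in \<open>auto intro: pmon_eq_mon\<close>)
          have pb: "pmon (val(K := 0)) b = mon val b"
            by (subst pmon_cong[where g=val]) (use keysK none nb in \<open>auto intro: pmon_eq_mon\<close>)
          have "mon val b * (mon val \<beta> + 1) = 0"
            using zeroT[OF nz ma] pa pb abb by (simp add: mon_add[OF nz] algebra_simps)
          then show False using mon_nz[OF nz] mb by (simp add: add_eq_0_iff) (metis minus_equation_iff)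
        qed
      qed
    qed
    show "(GREATEST n. P n) = 0"
      using P0 notP by (intro Greatest_equality[where P=P]) (metis not_one_le_zero le_zero_eq not_less_eq_eq One_nat_def)+
  qed
qed



lemma lookup_sum_single: "finite E \<Longrightarrow>
  Poly_Mapping.lookup (\<Sum>I\<in>E. Poly_Mapping.single I (f I)) v = (if v \<in> E then f v else 0)"
  by (simp add: lookup_sum lookup_single when_def)

lemma card_lift_edge: "card (lift_edge gl tw p) \<le> 2" "finite (lift_edge gl tw p)"
proof -
  have "{(\<sigma>', (if tw (fst p) then \<not> snd p else snd p)) | \<sigma>'. gl (fst p) = Some \<sigma>'} =
     (case gl (fst p) of None \<Rightarrow> {} | Some \<sigma>' \<Rightarrow> {(\<sigma>', (if tw (fst p) then \<not> snd p else snd p))})"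
    by (auto split: option.splits)
  then have e: "lift_edge gl tw p = insert p (case gl (fst p) of None \<Rightarrow> {} | Some \<sigma>' \<Rightarrow> {(\<sigma>', (if tw (fst p) then \<not> snd p else snd p))})"
    unfolding lift_edge_def by simp
  show "card (lift_edge gl tw p) \<le> 2" unfolding e
    by (cases "gl (fst p)") (auto intro: order_trans[OF card_insert_le_m1] simp: card_insert_if)
  show "finite (lift_edge gl tw p)" unfolding e by (cases "gl (fst p)") auto
qed

lemma lt3: "(s::nat) < 3 \<Longrightarrow> s = 0 \<or> s = 1 \<or> s = 2" by auto

lemma next_side_inj: "s < 3 \<Longrightarrow> s' < 3 \<Longrightarrow> next_side e s = next_side e s' \<Longrightarrow> s = s'"
  unfolding next_side_def using lt3[of s] lt3[of s'] by (auto split: if_splits)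

lemma next_side_neq: "s < 3 \<Longrightarrow> next_side e s \<noteq> s"
  unfolding next_side_def using lt3[of s] by auto

lemma next_side_lt: "next_side e s < 3"
  unfolding next_side_def by auto

lemma self_mem_lift: "p \<in> lift_edge gl tw p"
  unfolding lift_edge_def by simp

lemma sum_arrows_le:
  assumes fin: "finite Tr" "finite L" and that: "X = lift_edge gl tw p"
  shows "(\<Sum>A\<in>L. arrows Tr gl tw A X) \<le> 2 \<and> (\<Sum>A\<in>L. arrows Tr gl tw X A) \<le> 2"
proof -
  let ?U = "Tr \<times> {..<3::nat} \<times> (UNIV :: bool set)"
  have fU: "finite ?U" using fin by simp
  define S1 where "S1 A = {(t, s, \<epsilon>). t \<in> Tr \<and> s < 3 \<and>
      lift_edge gl tw ((t, s), \<epsilon>) = A \<and> lift_edge gl tw ((t, next_side \<epsilon> s), \<epsilon>) = X}" for A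
  define S2 where "S2 A = {(t, s, \<epsilon>). t \<in> Tr \<and> s < 3 \<and>
      lift_edge gl tw ((t, s), \<epsilon>) = X \<and> lift_edge gl tw ((t, next_side \<epsilon> s), \<epsilon>) = A}" for A
  have a1: "arrows Tr gl tw A X = card (S1 A)" for A unfolding arrows_def S1_def by simp
  have a2: "arrows Tr gl tw X A = card (S2 A)" for A unfolding arrows_def S2_def by simp
  have fS1: "finite (S1 A)" for A by (rule finite_subset[OF _ fU]) (auto simp: S1_def)
  have fS2: "finite (S2 A)" for A by (rule finite_subset[OF _ fU]) (auto simp: S2_def)
  have "(\<Sum>A\<in>L. card (S1 A)) = card (\<Union>A\<in>L. S1 A)"
    by (rule card_UN_disjoint[symmetric]) (use fin fS1 in \<open>auto simp: S1_def\<close>)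
  also have "\<dots> \<le> card X"
  proof (rule card_inj_on_le[where f="\<lambda>(t, s, \<epsilon>). ((t, next_side \<epsilon> s), \<epsilon>)"])
    show "inj_on (\<lambda>(t, s, \<epsilon>). ((t, next_side \<epsilon> s), \<epsilon>)) (\<Union>A\<in>L. S1 A)"
      by (auto simp: inj_on_def S1_def dest: next_side_inj)
    show "(\<lambda>(t, s, \<epsilon>). ((t, next_side \<epsilon> s), \<epsilon>)) ` (\<Union>A\<in>L. S1 A) \<subseteq> X"
      by (auto simp: S1_def intro: self_mem_lift)
    show "finite X" using that card_lift_edge by simp
  qed
  also have "\<dots> \<le> 2" using that card_lift_edge by simp
  finally have r1: "(\<Sum>A\<in>L. card (S1 A)) \<le> 2" .
  have "(\<Sum>A\<in>L. card (S2 A)) = card (\<Union>A\<in>L. S2 A)"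
    by (rule card_UN_disjoint[symmetric]) (use fin fS2 in \<open>auto simp: S2_def\<close>)
  also have "\<dots> \<le> card X"
  proof (rule card_inj_on_le[where f="\<lambda>(t, s, \<epsilon>). ((t, s), \<epsilon>)"])
    show "inj_on (\<lambda>(t, s, \<epsilon>). ((t, s), \<epsilon>)) (\<Union>A\<in>L. S2 A)"
      by (auto simp: inj_on_def)
    show "(\<lambda>(t, s, \<epsilon>). ((t, s), \<epsilon>)) ` (\<Union>A\<in>L. S2 A) \<subseteq> X"
      by (auto simp: S2_def intro: self_mem_lift)
    show "finite X" using that card_lift_edge by simp
  qed
  also have "\<dots> \<le> 2" using that card_lift_edge by simp
  finally have r2: "(\<Sum>A\<in>L. card (S2 A)) \<le> 2" .
  show ?thesis using r1 r2 by (simp add: a1 a2)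
qed

lemma finite_edge_of: "finite (edge_of gl \<sigma>)"
proof -
  have "{\<sigma>'. gl \<sigma> = Some \<sigma>'} \<subseteq> set_option (gl \<sigma>)" by auto
  then show ?thesis unfolding edge_of_def by (auto intro: finite_subset)
qed

lemma finite_edges: "finite Tr \<Longrightarrow> finite (edges Tr gl)"
  unfolding edges_def sides_def by simp

lemma finite_arcs: "finite Tr \<Longrightarrow> finite (arcs Tr gl)"
  unfolding arcs_def sides_def by simp

lemma arcs_sub_edges: "arcs Tr gl \<subseteq> edges Tr gl"
  unfolding arcs_def edges_def by auto

lemma bsum_bound:
  assumes "finite Tr" "I \<in> edges Tr gl"
  shows "\<bar>bsum Tr gl tw I J\<bar> \<le> 2"
proof -
  obtain \<sigma> where I: "I = edge_of gl \<sigma>" using assms(2) unfolding edges_def by auto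
  have fL: "finite (lifts gl tw I)" unfolding lifts_def I using finite_edge_of[of gl \<sigma>] by simp
  let ?j = "chosen_lift gl tw J"
  have b: "(\<Sum>A\<in>lifts gl tw I. arrows Tr gl tw A ?j) \<le> 2 \<and> (\<Sum>A\<in>lifts gl tw I. arrows Tr gl tw ?j A) \<le> 2"
    by (rule sum_arrows_le[OF assms(1) fL]) (simp add: chosen_lift_def)
  have "bsum Tr gl tw I J = int (\<Sum>A\<in>lifts gl tw I. arrows Tr gl tw A ?j) - int (\<Sum>A\<in>lifts gl tw I. arrows Tr gl tw ?j A)"
    unfolding bsum_def bQ_def by (simp add: sum_subtractf)
  then show ?thesis using b by linarith
qed

lemma mono_fix: "(lmono p + lmono q) * lmono e = lmono p + lmono q \<longleftrightarrow> e = (0::'v \<Rightarrow>\<^sub>0 int)"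
proof
  assume H: "(lmono p + lmono q) * lmono e = lmono p + lmono q"
  show "e = 0"
  proof (rule ccontr)
    assume e0: "e \<noteq> 0"
    have H2: "lmono (p + e) + lmono (q + e) = lmono p + lmono q"
      using H by (simp add: distrib_right lmono_mult)
    have lk: "Poly_Mapping.lookup (lmono x) y = (if x = y then 1 else 0)" for x y :: "'v \<Rightarrow>\<^sub>0 int"
      by (simp add: lmono_def lookup_single when_def)
    have pe: "p + e \<noteq> p" "q + e \<noteq> q" using e0 by auto
    have "Poly_Mapping.lookup (lmono (p + e) + lmono (q + e)) p = Poly_Mapping.lookup (lmono p + lmono q) p"
      using H2 by simp
    then have c1: "q + e = p" using pe by (simp add: lookup_add lk split: if_splits)
    have "Poly_Mapping.lookup (lmono (p + e) + lmono (q + e)) q = Poly_Mapping.lookup (lmono p + lmono q) q"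
      using H2 by simp
    then have c2: "p + e = q" using pe by (simp add: lookup_add lk split: if_splits)
    have "e + e = 0" using c1 c2 by (metis add.assoc add_cancel_right_right)
    then have "e = 0"
    proof (intro poly_mapping_eqI)
      fix v assume "e + e = 0"
      then have "Poly_Mapping.lookup (e + e) v = 0" by simp
      then show "Poly_Mapping.lookup e v = Poly_Mapping.lookup 0 v" by (simp add: lookup_add)
    qed
    with e0 show False by simp
  qed
qed (simp add: lmono_zero)



lemma arc_struct:
  assumes vg: "valid_gluing Tr gl tw" and K: "K \<in> arcs Tr gl"
  obtains \<sigma>0 \<sigma>1 where "K = {\<sigma>0, \<sigma>1}" "gl \<sigma>0 = Some \<sigma>1" "gl \<sigma>1 = Some \<sigma>0" "\<sigma>0 \<noteq> \<sigma>1"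
    "tw \<sigma>1 = tw \<sigma>0"
proof -
  obtain \<sigma>0 where s0: "\<sigma>0 \<in> sides Tr" "gl \<sigma>0 \<noteq> None" "K = edge_of gl \<sigma>0"
    using K unfolding arcs_def by auto
  then obtain \<sigma>1 where s1: "gl \<sigma>0 = Some \<sigma>1" by auto
  have "gl \<sigma>1 = Some \<sigma>0" "\<sigma>1 \<noteq> \<sigma>0" "tw \<sigma>1 = tw \<sigma>0"
    using vg s1 unfolding valid_gluing_def by blast+
  moreover have "K = {\<sigma>0, \<sigma>1}" using s0 s1 unfolding edge_of_def by auto
  ultimately show ?thesis using that s1 by auto
qed

lemma lift_mem:
  assumes "K = {\<sigma>0, \<sigma>1}" "gl \<sigma>0 = Some \<sigma>1" "gl \<sigma>1 = Some \<sigma>0"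
    and "lift_edge gl tw p = lift_edge gl tw q" "fst q \<in> K"
  shows "fst p \<in> K"
proof -
  have "p \<in> lift_edge gl tw q" using assms(4) self_mem_lift[of p gl tw] by simp
  then have "fst p = fst q \<or> gl (fst q) = Some (fst p)" unfolding lift_edge_def by auto
  then show ?thesis using assms by auto
qed

lemma nondeg_bsum:
  assumes vg: "valid_gluing Tr gl tw"
    and nd: "\<forall>t s s'. gl (t, s) = Some (t, s') \<longrightarrow> \<not> tw (t, s)"
    and K: "K \<in> arcs Tr gl"
  shows "bsum Tr gl tw K K = 0"
proof -
  obtain \<sigma>0 \<sigma>1 where st: "K = {\<sigma>0, \<sigma>1}" "gl \<sigma>0 = Some \<sigma>1" "gl \<sigma>1 = Some \<sigma>0" "\<sigma>0 \<noteq> \<sigma>1"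
    "tw \<sigma>1 = tw \<sigma>0" using arc_struct[OF vg K] by blast
  have same: "lift_edge gl tw ((t, s), \<epsilon>) = lift_edge gl tw ((t, next_side \<epsilon> s), \<epsilon>)"
    if "(t, s) \<in> K" "(t, next_side \<epsilon> s) \<in> K" "s < 3" for t s \<epsilon>
  proof -
    let ?s' = "next_side \<epsilon> s"
    have ne: "(t, s) \<noteq> (t, ?s')" using next_side_neq[OF that(3), of \<epsilon>] by auto
    have g1: "gl (t, s) = Some (t, ?s')" and g2: "gl (t, ?s') = Some (t, s)"
      using that ne st by auto
    have "\<not> tw (t, s)" "\<not> tw (t, ?s')" using nd g1 g2 by blast+
    then show ?thesis using g1 g2 unfolding lift_edge_def by auto
  qed
  let ?j = "chosen_lift gl tw K"
  have jK: "(SOME \<sigma>. \<sigma> \<in> K) \<in> K" using st by (metis insertI1 someI)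
  have jj: "?j = lift_edge gl tw ((SOME \<sigma>. \<sigma> \<in> K), False)" unfolding chosen_lift_def by simp
  have memj: "fst p \<in> K" if "lift_edge gl tw p = ?j" for p
    by (rule lift_mem[OF st(1-3), of tw p "((SOME \<sigma>. \<sigma> \<in> K), False)"]) (use that jj jK in auto)
  have memA: "fst p \<in> K" if h1: "lift_edge gl tw p = A" and h2: "A \<in> lifts gl tw K" for p A
  proof -
    obtain q where q: "A = lift_edge gl tw q" "fst q \<in> K" using h2 unfolding lifts_def by auto
    show ?thesis by (rule lift_mem[OF st(1-3), of tw p q]) (use h1 q in auto)
  qed
  have "bQ Tr gl tw A ?j = 0" if A: "A \<in> lifts gl tw K" for A
  proof (cases "A = ?j")
    case True then show ?thesis by (simp add: bQ_def)
  next
    case False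
    have e1: "{(t, s, \<epsilon>). t \<in> Tr \<and> s < 3 \<and> lift_edge gl tw ((t, s), \<epsilon>) = A \<and>
        lift_edge gl tw ((t, next_side \<epsilon> s), \<epsilon>) = ?j} = {}"
    proof -
      have F: False if h: "t \<in> Tr" "s < 3" "lift_edge gl tw ((t, s), \<epsilon>) = A"
        "lift_edge gl tw ((t, next_side \<epsilon> s), \<epsilon>) = ?j" for t s \<epsilon>
      proof -
        have "(t, s) \<in> K" using memA[OF h(3) A] by simp
        moreover have "(t, next_side \<epsilon> s) \<in> K" using memj[OF h(4)] by simp
        ultimately have "A = ?j" using same h by metis
        with False show False by simp
      qed
      show ?thesis using F by auto
    qed
    have e2: "{(t, s, \<epsilon>). t \<in> Tr \<and> s < 3 \<and> lift_edge gl tw ((t, s), \<epsilon>) = ?j \<and>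
        lift_edge gl tw ((t, next_side \<epsilon> s), \<epsilon>) = A} = {}"
    proof -
      have F: False if h: "t \<in> Tr" "s < 3" "lift_edge gl tw ((t, s), \<epsilon>) = ?j"
        "lift_edge gl tw ((t, next_side \<epsilon> s), \<epsilon>) = A" for t s \<epsilon>
      proof -
        have "(t, s) \<in> K" using memj[OF h(3)] by simp
        moreover have "(t, next_side \<epsilon> s) \<in> K" using memA[OF h(4) A] by simp
        ultimately have "A = ?j" using same h by metis
        with False show False by simp
      qed
      show ?thesis using F by auto
    qed
    show ?thesis unfolding bQ_def arrows_def e1 e2 by simp
  qed
  then show ?thesis unfolding bsum_def by simp
qed



lemma degenerate_arcs:
  assumes ts: "triangulated_surface Tr gl tw" and dg: "gl (t, s) = Some (t, s')" and tws: "tw (t, s)"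
  shows "arcs Tr gl = {edge_of gl (t, s)}"
proof -
  have vg: "valid_gluing Tr gl tw" and conn: "tri_connected Tr gl" and nm: "no_moebius_arc gl tw"
    using ts unfolding triangulated_surface_def by auto
  have sd: "(t, s) \<in> sides Tr" "(t, s') \<in> sides Tr" "s' \<noteq> s" "gl (t, s') = Some (t, s)"
    using vg dg unfolding valid_gluing_def by (metis option.distinct(1), blast, blast, blast)
  have s3: "s < 3" "s' < 3" using sd unfolding sides_def by auto
  have third: "gl (t, 3 - s - s') = None" using nm dg tws unfolding no_moebius_arc_def by blast
  have glt: "n = s \<or> n = s'" if "gl (t, n) \<noteq> None" for n
  proof -
    have "(t, n) \<in> sides Tr" using vg that unfolding valid_gluing_def by blast
    then have "n < 3" unfolding sides_def by auto
    moreover have "n \<noteq> 3 - s - s'" using third that by auto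
    ultimately show ?thesis using s3 sd(3) lt3[of n] lt3[of s] lt3[of s'] by auto
  qed
  have reach: "y = t" if "(t, y) \<in> {(a, b). \<exists>s s'. gl (a, s) = Some (b, s')}\<^sup>*" for y
    using that
  proof (induction rule: rtrancl_induct)
    case base then show ?case by simp
  next
    case (step y z)
    then obtain n1 n2 where g: "gl (t, n1) = Some (z, n2)" by auto
    then have "n1 = s \<or> n1 = s'" using glt by auto
    then show ?case using g dg sd(4) by auto
  qed
  have Tr1: "t' = t" if "t' \<in> Tr" for t'
  proof -
    have "t \<in> Tr" using sd unfolding sides_def by auto
    then show ?thesis using conn that reach unfolding tri_connected_def by blast
  qed
  have eo: "edge_of gl (t, s') = edge_of gl (t, s)"
    unfolding edge_of_def using dg sd(4) by auto
  show ?thesis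
  proof
    show "arcs Tr gl \<subseteq> {edge_of gl (t, s)}"
    proof
      fix X assume "X \<in> arcs Tr gl"
      then obtain \<sigma> where \<sigma>: "\<sigma> \<in> sides Tr" "gl \<sigma> \<noteq> None" "X = edge_of gl \<sigma>" unfolding arcs_def by auto
      obtain t' n where tn: "\<sigma> = (t', n)" by fastforce
      have "t' = t" using Tr1 \<sigma>(1) tn unfolding sides_def by auto
      then have "n = s \<or> n = s'" using glt \<sigma>(2) tn by auto
      then show "X \<in> {edge_of gl (t, s)}" using \<sigma>(3) tn \<open>t' = t\<close> eo by auto
    qed
    show "{edge_of gl (t, s)} \<subseteq> arcs Tr gl" using sd dg unfolding arcs_def by auto
  qed
qed

theorem lemma4p12:
  fixes Tr :: "nat set" and gl :: "side \<Rightarrow> side option" and tw :: "side \<Rightarrow> bool"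
    and I :: "side set"
  assumes "triangulated_surface Tr gl tw"
    and "I \<in> arcs Tr gl"
  shows "normalized_exchange_poly Tr gl tw I = exchange_poly Tr gl tw I \<longleftrightarrow>
         (\<forall>J \<in> arcs Tr gl. J \<noteq> I \<longrightarrow> exchange_poly Tr gl tw I \<noteq> exchange_poly Tr gl tw J)"
proof -
  have vg: "valid_gluing Tr gl tw" using assms(1) unfolding triangulated_surface_def by auto
  then have fT: "finite Tr" unfolding valid_gluing_def by auto
  define E where "E = edges Tr gl"
  define A where "A = arcs Tr gl"
  have fE: "finite E" unfolding E_def using finite_edges[OF fT] .
  have fA: "finite A" unfolding A_def using finite_arcs[OF fT] .
  have AE: "A \<subseteq> E" unfolding A_def E_def by (rule arcs_sub_edges)
  define pos where "pos J = (\<Sum>I\<in>E. Poly_Mapping.single I (max (bsum Tr gl tw I J) 0))" for J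
  define neg where "neg J = (\<Sum>I\<in>E. Poly_Mapping.single I (max (- bsum Tr gl tw I J) 0))" for J
  have F: "exchange_poly Tr gl tw J = lmono (pos J) + lmono (neg J)" for J
    unfolding exchange_poly_def pos_def neg_def E_def by simp
  define ne where "ne K = norm_exp Tr gl tw I K" for K
  have LHS: "normalized_exchange_poly Tr gl tw I = exchange_poly Tr gl tw I \<longleftrightarrow> (\<forall>K\<in>A - {I}. ne K = 0)"
  proof -
    have "normalized_exchange_poly Tr gl tw I = exchange_poly Tr gl tw I \<longleftrightarrow>
       (\<Sum>K\<in>A - {I}. Poly_Mapping.single K (- int (ne K))) = 0"
      unfolding normalized_exchange_poly_def F A_def ne_def by (rule mono_fix)
    also have "\<dots> \<longleftrightarrow> (\<forall>K\<in>A - {I}. ne K = 0)"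
    proof
      assume h: "(\<Sum>K\<in>A - {I}. Poly_Mapping.single K (- int (ne K))) = 0"
      show "\<forall>K\<in>A - {I}. ne K = 0"
      proof
        fix K assume K: "K \<in> A - {I}"
        have "Poly_Mapping.lookup (\<Sum>K\<in>A - {I}. Poly_Mapping.single K (- int (ne K))) K = 0"
          using h by simp
        then show "ne K = 0" using K fA by (simp add: lookup_sum_single)
      qed
    next
      assume "\<forall>K\<in>A - {I}. ne K = 0"
      then show "(\<Sum>K\<in>A - {I}. Poly_Mapping.single K (- int (ne K))) = 0" by simp
    qed
    finally show ?thesis .
  qed
  show ?thesis
  proof (cases "\<exists>t s s'. gl (t, s) = Some (t, s') \<and> tw (t, s)")
    case True
    then obtain t s s' where "gl (t, s) = Some (t, s')" "tw (t, s)" by blast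
    then have "A = {edge_of gl (t, s)}" unfolding A_def using degenerate_arcs[OF assms(1)] by blast
    then have "A = {I}" using assms(2) unfolding A_def by auto
    then show ?thesis using LHS unfolding A_def by auto
  next
    case False
    then have nd: "\<forall>t s s'. gl (t, s) = Some (t, s') \<longrightarrow> \<not> tw (t, s)" by blast
    have lpos: "Poly_Mapping.lookup (pos J) v = (if v \<in> E then max (bsum Tr gl tw v J) 0 else 0)" for J v
      unfolding pos_def by (rule lookup_sum_single[OF fE])
    have lneg: "Poly_Mapping.lookup (neg J) v = (if v \<in> E then max (- bsum Tr gl tw v J) 0 else 0)" for J v
      unfolding neg_def by (rule lookup_sum_single[OF fE])
    have bnd: "\<bar>bsum Tr gl tw v J\<bar> \<le> 2" if "v \<in> E" for v J
      using bsum_bound[OF fT] that unfolding E_def by blast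
    have nn: "\<forall>v. 0 \<le> Poly_Mapping.lookup (pos J) v \<and> Poly_Mapping.lookup (pos J) v \<le> 2"
             "\<forall>v. 0 \<le> Poly_Mapping.lookup (neg J) v \<and> Poly_Mapping.lookup (neg J) v \<le> 2" for J
      using bnd by (auto simp: lpos lneg abs_le_iff)
    have dj: "\<forall>v. Poly_Mapping.lookup (pos J) v = 0 \<or> Poly_Mapping.lookup (neg J) v = 0" for J
      by (auto simp: lpos lneg)
    have each: "ne K = 0 \<longleftrightarrow> exchange_poly Tr gl tw I \<noteq> exchange_poly Tr gl tw K" if K: "K \<in> A" for K
    proof -
      have bK: "bsum Tr gl tw K K = 0" using nondeg_bsum[OF vg nd] K unfolding A_def by blast
      have cK: "Poly_Mapping.lookup (pos K) K = 0" "Poly_Mapping.lookup (neg K) K = 0"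
        using bK by (auto simp: lpos lneg)
      show ?thesis
        unfolding ne_def norm_exp_def F
        by (rule alg_main[OF nn(1) nn(2) nn(1) nn(2) dj dj cK])
    qed
    show ?thesis using LHS each unfolding A_def by auto
  qed
qed


end
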